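(* Let $h\in\mathbb{F}[x]$ with $\deg h\ge1$. Then: (i) every $\omega\in\mathrm{Aut}_{\mathbb{F}}(A_h)$ can be written $\omega=\phi_f\circ\tau_{\alpha,\beta}$ for some $(\alpha,\beta)\in\mathbb{P}$ and $f\in\mathbb{F}[x]$; (ii) for $(\alpha,\beta)\in\mathbb{P}$ and $f\in\mathbb{F}[x]$, $\tau_{\alpha,\beta}=\phi_f$ if and only if $\alpha=1$, $\beta=0$ and $f=0$; (iii) if $(\alpha,\beta)\in\mathbb{P}$, $\alpha\ne1$ and $\alpha^\ell=1$ for some $\ell\ge2$, then $\tau_{\alpha,\beta}^\ell=\mathrm{id}_{A_h}$; (iv) the abelian group $\{\phi_f: f\in\mathbb{F}[x]\}$, isomorphic to $(\mathbb{F}[x],+)$ via $f\mapsto\phi_f$, is a normal subgroup of $\mathrm{Aut}_{\mathbb{F}}(A_h)$; (v) $\tau_{\mathbb{P}}=\{\tau_{\alpha,\beta}:(\alpha,\beta)\in\mathbb{P}\}$ is a subgroup of $\mathrm{Aut}_{\mathbb{F}}(A_h)$ and $\mathrm{Aut}_{\mathbb{F}}(A_h)=\{\phi_f:f\in\mathbb{F}[x]\}\rtimes\tau_{\mathbb{P}}$.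
   Context: $\mathbb{F}$ is an arbitrary field. For $h\in\mathbb{F}[x]$, $A_h$ is the unital associative $\mathbb{F}$-algebra generated by $x,\hat y$ with defining relation $\hat yx-x\hat y=h$. Let $\mathbb{P}=\{(\alpha,\beta)\in\mathbb{F}^*\times\mathbb{F}: h(\alpha x+\beta)=\alpha^{\deg h}h(x)\}$. For $(\alpha,\beta)\in\mathbb{P}$, $\tau_{\alpha,\beta}$ is the automorphism of $A_h$ with $\tau_{\alpha,\beta}(x)=\alpha x+\beta$, $\tau_{\alpha,\beta}(\hat y)=\alpha^{\deg h-1}\hat y$. For $f\in\mathbb{F}[x]$, $\phi_f$ is the automorphism with $\phi_f(x)=x$, $\phi_f(\hat y)=\hat y+f$. *)

theory Defs
  imports "HOL-Computational_Algebra.Polynomial" "HOL-Algebra.Coset"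
begin

text \<open>Concrete model of A_h: the Ore extension F[x][y; delta] with delta = h * d/dx.
An element is a polynomial in y with coefficients in F[x] written on the left:
  sum_i a_i(x) y^i  is represented by the 'a poly poly with coeff i = a_i.
The relation y p = p y + h p' gives
  y^n p = sum_k (n choose k) delta^k(p) y^(n-k).\<close>

definition ah_delta :: "'a::field poly \<Rightarrow> 'a poly \<Rightarrow> 'a poly" where
  "ah_delta h p = h * pderiv p"

definition ah_mult :: "'a::field poly \<Rightarrow> 'a poly poly \<Rightarrow> 'a poly poly \<Rightarrow> 'a poly poly" where
  "ah_mult h a b =
     (\<Sum>i\<le>degree a. \<Sum>j\<le>degree b. \<Sum>k\<le>i.
        monom (coeff a i * smult (of_nat (i choose k)) ((ah_delta h ^^ k) (coeff b j))) (i - k + j))"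

definition ah_x :: "'a::field poly poly" where "ah_x = [: [:0, 1:] :]"
definition ah_y :: "'a::field poly poly" where "ah_y = monom 1 1"
definition ah_const :: "'a::field poly \<Rightarrow> 'a poly poly" where "ah_const f = [: f :]"
definition ah_scal :: "'a::field \<Rightarrow> 'a poly poly \<Rightarrow> 'a poly poly" where "ah_scal c a = smult [:c:] a"

definition is_aut :: "'a::field poly \<Rightarrow> ('a poly poly \<Rightarrow> 'a poly poly) \<Rightarrow> bool" where
  "is_aut h w \<longleftrightarrow> bij w \<and> w 1 = 1
     \<and> (\<forall>a b. w (a + b) = w a + w b)
     \<and> (\<forall>c a. w (ah_scal c a) = ah_scal c (w a))
     \<and> (\<forall>a b. w (ah_mult h a b) = ah_mult h (w a) (w b))"

definition Aut_group :: "'a::field poly \<Rightarrow> ('a poly poly \<Rightarrow> 'a poly poly) monoid" where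
  "Aut_group h = \<lparr>carrier = {w. is_aut h w}, monoid.mult = (\<lambda>f g. f \<circ> g), one = id\<rparr>"

definition Pset :: "'a::field poly \<Rightarrow> ('a \<times> 'a) set" where
  "Pset h = {(\<alpha>, \<beta>). \<alpha> \<noteq> 0 \<and> pcompose h [:\<beta>, \<alpha>:] = smult (\<alpha> ^ degree h) h}"

definition tau :: "'a::field poly \<Rightarrow> 'a \<Rightarrow> 'a \<Rightarrow> ('a poly poly \<Rightarrow> 'a poly poly)" where
  "tau h \<alpha> \<beta> = (THE w. is_aut h w \<and> w ah_x = ah_const [:\<beta>, \<alpha>:]
                      \<and> w ah_y = ah_scal (\<alpha> ^ (degree h - 1)) ah_y)"

definition phi :: "'a::field poly \<Rightarrow> 'a poly \<Rightarrow> ('a poly poly \<Rightarrow> 'a poly poly)" where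
  "phi h f = (THE w. is_aut h w \<and> w ah_x = ah_x \<and> w ah_y = ah_y + ah_const f)"

end

theory Submission
  imports Defs
begin
lemma d_0[simp]: "ah_delta h 0 = 0" by (simp add: ah_delta_def)
lemma d_add: "ah_delta h (p + q) = ah_delta h p + ah_delta h q" by (simp add: ah_delta_def pderiv_add distrib_left)
lemma d_mult: "ah_delta h (p * q) = p * ah_delta h q + ah_delta h p * q" by (simp add: ah_delta_def pderiv_mult algebra_simps)
lemma d_const[simp]: "ah_delta h [:c:] = 0" by (simp add: ah_delta_def pderiv_pCons)
lemma d_one[simp]: "ah_delta h 1 = 0" by (simp add: ah_delta_def)
lemma d_smult: "ah_delta h (smult c p) = smult c (ah_delta h p)" by (simp add: ah_delta_def pderiv_smult)
lemma d_minus: "ah_delta h (- p) = - ah_delta h p" by (simp add: ah_delta_def pderiv_minus)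
lemma d_diff: "ah_delta h (p - q) = ah_delta h p - ah_delta h q" by (simp add: ah_delta_def pderiv_diff algebra_simps)
lemma d_ofnat: "ah_delta h (of_nat n * p) = of_nat n * ah_delta h p"
proof -
  have "ah_delta h (of_nat n) = 0" by (simp add: of_nat_poly)
  thus ?thesis by (simp add: d_mult)
qed
lemma smult_sum_right: "smult c (sum f A) = (\<Sum>i\<in>A. smult c (f i))"
  by (induction A rule: infinite_finite_induct) (auto simp: smult_add_right)

definition Ly :: "'a::field poly \<Rightarrow> 'a poly poly \<Rightarrow> 'a poly poly" where
  "Ly h b = pCons 0 b + map_poly (ah_delta h) b"

lemma coeff_Ly: "coeff (Ly h b) n = (case n of 0 \<Rightarrow> 0 | Suc m \<Rightarrow> coeff b m) + ah_delta h (coeff b n)"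
  by (simp add: Ly_def coeff_pCons coeff_map_poly split: nat.split)

lemma Ly_add: "Ly h (a + b) = Ly h a + Ly h b"
  by (rule poly_eqI) (simp add: coeff_Ly d_add split: nat.split)
lemma Ly_0[simp]: "Ly h 0 = 0"
  by (rule poly_eqI) (simp add: coeff_Ly split: nat.split)
lemma Ly_smult: "Ly h (smult p b) = smult p (Ly h b) + smult (ah_delta h p) b"
  by (rule poly_eqI) (simp add: coeff_Ly d_mult algebra_simps split: nat.split)
lemma Ly_monom: "Ly h (monom p n) = monom p (Suc n) + monom (ah_delta h p) n"
  by (rule poly_eqI) (simp add: coeff_Ly coeff_monom split: nat.split)
lemma Ly_ofnat: "Ly h (of_nat k * b) = of_nat k * Ly h b"
proof -
  have "of_nat k * b = smult (of_nat k) b" for b :: "'a poly poly"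
    by (simp add: of_nat_poly)
  thus ?thesis by (simp add: Ly_smult d_ofnat[where p=1, simplified])
qed
lemma Ly_sum: "Ly h (sum f A) = (\<Sum>j\<in>A. Ly h (f j))"
  by (induction A rule: infinite_finite_induct) (auto simp: Ly_add)
lemma Lpow_add: "(Ly h ^^ i) (a + b) = (Ly h ^^ i) a + (Ly h ^^ i) b"
  by (induction i) (auto simp: Ly_add)
lemma Lpow_0[simp]: "(Ly h ^^ i) 0 = 0"
  by (induction i) auto
lemma Lpow_sum: "(Ly h ^^ i) (sum f A) = (\<Sum>j\<in>A. (Ly h ^^ i) (f j))"
  by (induction A rule: infinite_finite_induct) (auto simp: Lpow_add)

lemma pascal_sum:
  fixes t :: "nat \<Rightarrow> 'b::comm_semiring_1"
  shows "(\<Sum>k\<le>Suc i. of_nat (Suc i choose k) * t k)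
       = (\<Sum>k\<le>i. of_nat (i choose k) * t k) + (\<Sum>k\<le>i. of_nat (i choose k) * t (Suc k))"
proof -
  have "(\<Sum>k\<le>Suc i. of_nat (Suc i choose k) * t k)
       = t 0 + (\<Sum>k\<le>i. (of_nat (i choose k) + of_nat (i choose Suc k)) * t (Suc k))"
    unfolding sum.atMost_Suc_shift by simp
  also have "\<dots> = (t 0 + (\<Sum>k\<le>i. of_nat (i choose Suc k) * t (Suc k)))
                   + (\<Sum>k\<le>i. of_nat (i choose k) * t (Suc k))"
    by (simp add: sum.distrib algebra_simps)
  also have "t 0 + (\<Sum>k\<le>i. of_nat (i choose Suc k) * t (Suc k)) = (\<Sum>k\<le>Suc i. of_nat (i choose k) * t k)"
    by (subst sum.atMost_Suc_shift) simp
  also have "\<dots> = (\<Sum>k\<le>i. of_nat (i choose k) * t k)"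
    by (simp add: binomial_eq_0)
  finally show ?thesis .
qed

lemma Lpow_monom:
  "(Ly h ^^ i) (monom q j) = (\<Sum>k\<le>i. of_nat (i choose k) * monom ((ah_delta h ^^ k) q) (i - k + j))"
proof (induction i)
  case 0 then show ?case by simp
next
  case (Suc i)
  let ?t = "\<lambda>k. monom ((ah_delta h ^^ k) q) (Suc i - k + j)"
  have "(Ly h ^^ Suc i) (monom q j) = Ly h (\<Sum>k\<le>i. of_nat (i choose k) * monom ((ah_delta h ^^ k) q) (i - k + j))"
    using Suc by simp
  also have "\<dots> = (\<Sum>k\<le>i. of_nat (i choose k) * (monom ((ah_delta h ^^ k) q) (Suc (i - k + j))
                     + monom ((ah_delta h ^^ Suc k) q) (i - k + j)))"
    by (simp add: Ly_sum Ly_ofnat Ly_monom)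
  also have "\<dots> = (\<Sum>k\<le>i. of_nat (i choose k) * ?t k) + (\<Sum>k\<le>i. of_nat (i choose k) * ?t (Suc k))"
    by (simp add: sum.distrib distrib_left Suc_diff_le)
  also have "\<dots> = (\<Sum>k\<le>Suc i. of_nat (Suc i choose k) * ?t k)"
    by (rule pascal_sum[symmetric])
  finally show ?case .
qed

lemma monom_helper: "monom (a * smult (of_nat c) d) n = smult a (of_nat c * monom d n)"
  by (simp add: of_nat_poly smult_monom algebra_simps)

lemma mult_op: "ah_mult h a b = (\<Sum>i\<le>degree a. smult (coeff a i) ((Ly h ^^ i) b))"
proof -
  have "smult (coeff a i) ((Ly h ^^ i) b) = (\<Sum>j\<le>degree b. \<Sum>k\<le>i.
        monom (coeff a i * smult (of_nat (i choose k)) ((ah_delta h ^^ k) (coeff b j))) (i - k + j))" for i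
  proof -
    have "(Ly h ^^ i) b = (Ly h ^^ i) (\<Sum>j\<le>degree b. monom (coeff b j) j)"
      by (simp add: poly_as_sum_of_monoms)
    also have "\<dots> = (\<Sum>j\<le>degree b. \<Sum>k\<le>i. of_nat (i choose k) * monom ((ah_delta h ^^ k) (coeff b j)) (i - k + j))"
      by (simp add: Lpow_sum Lpow_monom)
    finally show ?thesis by (simp only: smult_sum_right monom_helper)
  qed
  thus ?thesis unfolding ah_mult_def by simp
qed

lemma mult_op_le: "degree a \<le> N \<Longrightarrow> ah_mult h a b = (\<Sum>i\<le>N. smult (coeff a i) ((Ly h ^^ i) b))"
  unfolding mult_op by (rule sum.mono_neutral_left) (auto simp: coeff_eq_0)

lemma mult_add_left: "ah_mult h (a1 + a2) b = ah_mult h a1 b + ah_mult h a2 b"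
proof -
  let ?N = "max (degree a1) (degree a2)"
  have "degree (a1 + a2) \<le> ?N" by (rule degree_add_le_max)
  thus ?thesis
    by (simp add: mult_op_le[of _ ?N] smult_add_left sum.distrib)
qed
lemma mult_0_left[simp]: "ah_mult h 0 b = 0" by (simp add: mult_op)
lemma mult_0_right[simp]: "ah_mult h a 0 = 0" by (simp add: mult_op)
lemma mult_smult_left: "ah_mult h (smult p a) b = smult p (ah_mult h a b)"
proof -
  have "degree (smult p a) \<le> degree a" by (rule degree_smult_le)
  thus ?thesis by (simp add: mult_op_le[of _ "degree a"] smult_sum_right)
qed
lemma mult_sum_left: "ah_mult h (sum f A) b = (\<Sum>i\<in>A. ah_mult h (f i) b)"
  by (induction A rule: infinite_finite_induct) (auto simp: mult_add_left)
lemma mult_monom_left: "ah_mult h (monom p i) b = smult p ((Ly h ^^ i) b)"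
proof -
  have "ah_mult h (monom p i) b = (\<Sum>k\<le>i. smult (coeff (monom p i) k) ((Ly h ^^ k) b))"
    by (rule mult_op_le) (simp add: degree_monom_le)
  also have "\<dots> = (\<Sum>k\<in>{i}. smult (coeff (monom p i) k) ((Ly h ^^ k) b))"
    by (rule sum.mono_neutral_right) (auto simp: coeff_monom)
  finally show ?thesis by simp
qed
lemma mult_add_right: "ah_mult h a (b1 + b2) = ah_mult h a b1 + ah_mult h a b2"
  by (simp add: mult_op Lpow_add smult_add_right sum.distrib)
lemma mult_sum_right: "ah_mult h a (sum f A) = (\<Sum>i\<in>A. ah_mult h a (f i))"
  by (induction A rule: infinite_finite_induct) (auto simp: mult_add_right)
lemma mult_minus_left: "ah_mult h (- a) b = - ah_mult h a b"
  using mult_add_left[of h "-a" a b] by (simp add: eq_neg_iff_add_eq_0)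
lemma mult_minus_right: "ah_mult h a (- b) = - ah_mult h a b"
  using mult_add_right[of h a "-b" b] by (simp add: eq_neg_iff_add_eq_0)
lemma mult_diff_left: "ah_mult h (a1 - a2) b = ah_mult h a1 b - ah_mult h a2 b"
  using mult_add_left[of h a1 "-a2" b] by (simp add: mult_minus_left)
lemma mult_diff_right: "ah_mult h a (b1 - b2) = ah_mult h a b1 - ah_mult h a b2"
  using mult_add_right[of h a b1 "-b2"] by (simp add: mult_minus_right)

lemma Ly_cscal: "Ly h (smult [:c:] b) = smult [:c:] (Ly h b)"
  by (simp add: Ly_smult)
lemma Lpow_cscal: "(Ly h ^^ i) (smult [:c:] b) = smult [:c:] ((Ly h ^^ i) b)"
  by (induction i) (auto simp: Ly_cscal)
lemma mult_cscal_right: "ah_mult h a (smult [:c:] b) = smult [:c:] (ah_mult h a b)"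
  by (simp add: mult_op Lpow_cscal smult_sum_right mult.commute)
lemma mult_scal_left: "ah_mult h (ah_scal c a) b = ah_scal c (ah_mult h a b)"
  by (simp add: ah_scal_def mult_smult_left)
lemma mult_scal_right: "ah_mult h a (ah_scal c b) = ah_scal c (ah_mult h a b)"
  by (simp add: ah_scal_def mult_cscal_right)

lemma Ly_mult_monom: "Ly h (ah_mult h (monom p i) b) = ah_mult h (Ly h (monom p i)) b"
  by (simp add: mult_monom_left Ly_smult Ly_monom mult_add_left)

lemma Ly_mult: "Ly h (ah_mult h a b) = ah_mult h (Ly h a) b"
proof -
  have "Ly h (ah_mult h a b) = Ly h (ah_mult h (\<Sum>i\<le>degree a. monom (coeff a i) i) b)"
    by (simp add: poly_as_sum_of_monoms)
  also have "\<dots> = (\<Sum>i\<le>degree a. ah_mult h (Ly h (monom (coeff a i) i)) b)"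
    by (simp add: mult_sum_left Ly_sum Ly_mult_monom)
  also have "\<dots> = ah_mult h (Ly h (\<Sum>i\<le>degree a. monom (coeff a i) i)) b"
    by (simp add: mult_sum_left Ly_sum)
  finally show ?thesis by (simp add: poly_as_sum_of_monoms)
qed
lemma Lpow_mult: "(Ly h ^^ i) (ah_mult h a b) = ah_mult h ((Ly h ^^ i) a) b"
  by (induction i) (auto simp: Ly_mult)

lemma mult_assoc: "ah_mult h (ah_mult h a b) c = ah_mult h a (ah_mult h b c)"
proof -
  have m: "ah_mult h (ah_mult h (monom p i) b) c = ah_mult h (monom p i) (ah_mult h b c)" for p i
    by (simp add: mult_monom_left mult_smult_left Lpow_mult)
  have "ah_mult h (ah_mult h a b) c = ah_mult h (ah_mult h (\<Sum>i\<le>degree a. monom (coeff a i) i) b) c"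
    by (simp add: poly_as_sum_of_monoms)
  also have "\<dots> = (\<Sum>i\<le>degree a. ah_mult h (monom (coeff a i) i) (ah_mult h b c))"
    by (simp add: mult_sum_left m)
  also have "\<dots> = ah_mult h (\<Sum>i\<le>degree a. monom (coeff a i) i) (ah_mult h b c)"
    by (simp add: mult_sum_left)
  finally show ?thesis by (simp add: poly_as_sum_of_monoms)
qed

lemma Lpow_monom1: "(Ly h ^^ i) (monom 1 j) = monom 1 (i + j)"
  by (induction i) (auto simp: Ly_monom)
lemma monom10: "monom (1::'b::comm_semiring_1) 0 = 1" by (simp add: monom_0 one_pCons)
lemma mult_1_left[simp]: "ah_mult h 1 b = b"
  using mult_monom_left[of h 1 0 b] by (simp add: monom10)
lemma mult_1_right[simp]: "ah_mult h a 1 = a"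
proof -
  have "ah_mult h a 1 = (\<Sum>i\<le>degree a. smult (coeff a i) (monom 1 i))"
    using Lpow_monom1[where j=0 and h=h] by (simp add: mult_op monom10)
  thus ?thesis by (simp add: smult_monom poly_as_sum_of_monoms)
qed

lemma const_monom: "ah_const p = monom p 0" by (simp add: ah_const_def monom_0)
lemma mult_const_left: "ah_mult h (ah_const p) b = smult p b"
  by (simp add: const_monom mult_monom_left)
lemma mult_const_const: "ah_mult h (ah_const p) (ah_const q) = ah_const (p * q)"
  unfolding mult_const_left by (simp add: ah_const_def)
lemma mult_y_left: "ah_mult h ah_y b = Ly h b"
  by (simp add: ah_y_def mult_monom_left)
lemma monom11: "monom (1::'b::comm_semiring_1) 1 = [:0, 1:]"
  by (simp add: monom_Suc monom_0)
lemma monom11_mult: "monom (1::'a::field poly) (Suc 0) * c = pCons 0 c"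
  by (simp add: monom_Suc monom_0)
lemma mult_y_right: "ah_mult h a ah_y = pCons 0 a"
proof -
  have "ah_mult h a ah_y = (\<Sum>i\<le>degree a. monom 1 1 * monom (coeff a i) i)"
    using Lpow_monom1[where j=1 and h=h] by (simp add: mult_op ah_y_def smult_monom mult_monom)
  also have "\<dots> = monom 1 1 * a" by (simp add: sum_distrib_left[symmetric] poly_as_sum_of_monoms)
  finally show ?thesis by (simp add: monom11_mult)
qed
lemma pCons_split: "pCons c a = ah_const c + ah_mult h a ah_y"
  by (simp add: mult_y_right ah_const_def)

lemma Lpow_mod: "\<exists>u. (Ly h ^^ i) b = monom 1 i * b + smult h u"
proof (induction i)
  case 0 then show ?case by (auto intro: exI[of _ 0])
next
  case (Suc i)
  then obtain u where u: "(Ly h ^^ i) b = monom 1 i * b + smult h u" by blast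
  have L: "Ly h c = monom 1 1 * c + smult h (map_poly pderiv c)" for c
    by (rule poly_eqI) (simp add: coeff_Ly monom11_mult coeff_pCons coeff_map_poly ah_delta_def split: nat.split)
  have "(Ly h ^^ Suc i) b = monom 1 1 * (monom 1 i * b + smult h u)
        + smult h (map_poly pderiv (monom 1 i * b + smult h u))"
    using u by (simp add: L)
  also have "\<dots> = monom 1 (Suc i) * b + smult h (monom 1 1 * u + map_poly pderiv (monom 1 i * b + smult h u))"
    by (simp add: algebra_simps mult_monom smult_add_right)
  finally show ?case by blast
qed

lemma mult_mod: "\<exists>u. ah_mult h a b = a * b + smult h u"
proof -
  obtain U where U: "\<And>i. (Ly h ^^ i) b = monom 1 i * b + smult h (U i)"
    using Lpow_mod[where h=h and b=b] by metis
  have "ah_mult h a b = (\<Sum>i\<le>degree a. monom (coeff a i) i * b + smult h (smult (coeff a i) (U i)))"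
    by (simp add: mult_op U smult_add_right smult_monom_mult mult.commute[of "coeff a _" h])
  also have "\<dots> = a * b + smult h (\<Sum>i\<le>degree a. smult (coeff a i) (U i))"
    by (simp add: sum.distrib sum_distrib_right[symmetric] poly_as_sum_of_monoms smult_sum_right)
  finally show ?thesis by blast
qed

lemma comm_mod: "\<exists>u. ah_mult h a b - ah_mult h b a = smult h u"
proof -
  obtain u v where "ah_mult h a b = a * b + smult h u" "ah_mult h b a = b * a + smult h v"
    using mult_mod by metis
  hence "ah_mult h a b - ah_mult h b a = smult h (u - v)" by (simp add: mult.commute smult_diff_right)
  thus ?thesis by blast
qed

lemma Ly_bound: "degree c \<le> n \<Longrightarrow> degree (Ly h c) \<le> Suc n \<and> coeff (Ly h c) (Suc n) = coeff c n"
  by (auto intro!: degree_le simp: coeff_Ly coeff_eq_0 split: nat.split)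

lemma Lpow_deg: "degree ((Ly h ^^ i) b) \<le> i + degree b \<and> coeff ((Ly h ^^ i) b) (i + degree b) = lead_coeff b"
proof (induction i)
  case 0 then show ?case by simp
next
  case (Suc i)
  have "degree (Ly h ((Ly h ^^ i) b)) \<le> Suc (i + degree b)
      \<and> coeff (Ly h ((Ly h ^^ i) b)) (Suc (i + degree b)) = coeff ((Ly h ^^ i) b) (i + degree b)"
    by (rule Ly_bound) (use Suc.IH in blast)
  then show ?case using Suc.IH by simp
qed

lemma coeff_mult_op: "coeff (ah_mult h a b) n = (\<Sum>i\<le>degree a. coeff a i * coeff ((Ly h ^^ i) b) n)"
  by (simp add: mult_op coeff_sum)

lemma mult_deg:
  assumes "a \<noteq> 0" "b \<noteq> 0"
  shows "degree (ah_mult h a b) = degree a + degree b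
       \<and> coeff (ah_mult h a b) (degree a + degree b) = lead_coeff a * lead_coeff b"
proof -
  have z: "coeff ((Ly h ^^ i) b) n = 0" if "i + degree b < n" for i n
    using Lpow_deg[where h=h and i=i and b=b] that by (intro coeff_eq_0) simp
  have le: "degree (ah_mult h a b) \<le> degree a + degree b"
  proof (rule degree_le, intro allI impI)
    fix n assume "degree a + degree b < n"
    thus "coeff (ah_mult h a b) n = 0"
      by (simp add: coeff_mult_op z)
  qed
  have "coeff (ah_mult h a b) (degree a + degree b)
      = (\<Sum>i<Suc (degree a). coeff a i * coeff ((Ly h ^^ i) b) (degree a + degree b))"
    by (simp add: coeff_mult_op lessThan_Suc_atMost)
  also have "\<dots> = (\<Sum>i<degree a. coeff a i * coeff ((Ly h ^^ i) b) (degree a + degree b))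
                 + lead_coeff a * lead_coeff b"
    using Lpow_deg[where h=h and i="degree a" and b=b] by simp
  also have "(\<Sum>i<degree a. coeff a i * coeff ((Ly h ^^ i) b) (degree a + degree b)) = 0"
    by (rule sum.neutral) (auto simp: z)
  finally have c: "coeff (ah_mult h a b) (degree a + degree b) = lead_coeff a * lead_coeff b" by simp
  with assms have "coeff (ah_mult h a b) (degree a + degree b) \<noteq> 0" by simp
  hence "degree a + degree b \<le> degree (ah_mult h a b)" by (rule le_degree)
  with le c show ?thesis by simp
qed

lemma mult_nz: assumes "a \<noteq> 0" "b \<noteq> 0" shows "ah_mult h a b \<noteq> 0"
proof -
  from mult_deg[OF assms, of h] have "coeff (ah_mult h a b) (degree a + degree b) = lead_coeff a * lead_coeff b" by blast
  moreover have "lead_coeff a * lead_coeff b \<noteq> 0" using assms by simp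
  ultimately show ?thesis by auto
qed

definition ahom :: "'a::field poly \<Rightarrow> ('a poly poly \<Rightarrow> 'a poly poly) \<Rightarrow> bool" where
  "ahom h w \<longleftrightarrow> w 1 = 1 \<and> (\<forall>a b. w (a + b) = w a + w b)
     \<and> (\<forall>c a. w (ah_scal c a) = ah_scal c (w a))
     \<and> (\<forall>a b. w (ah_mult h a b) = ah_mult h (w a) (w b))"

lemma is_aut_iff: "is_aut h w \<longleftrightarrow> bij w \<and> ahom h w"
  by (auto simp: is_aut_def ahom_def)

context fixes h :: "'a::field poly" and w assumes hw: "ahom h w"
begin
lemma hom_1: "w 1 = 1" using hw by (simp add: ahom_def)
lemma hom_add: "w (a + b) = w a + w b" using hw by (simp add: ahom_def)
lemma hom_scal: "w (ah_scal c a) = ah_scal c (w a)" using hw by (simp add: ahom_def)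
lemma hom_mult: "w (ah_mult h a b) = ah_mult h (w a) (w b)" using hw by (simp add: ahom_def)
lemma hom_0: "w 0 = 0" using hom_add[of 0 0] by (metis add_cancel_right_right add_0)
lemma hom_minus: "w (- a) = - w a" using hom_add[of a "-a"] by (simp add: hom_0 eq_neg_iff_add_eq_0 add.commute)
lemma hom_diff: "w (a - b) = w a - w b" using hom_add[of a "-b"] by (simp add: hom_minus)
lemma hom_sum: "w (sum f A) = (\<Sum>i\<in>A. w (f i))"
  by (induction A rule: infinite_finite_induct) (auto simp: hom_0 hom_add)

lemma hom_const_pCons: "w (ah_const (pCons c p)) = ah_scal c 1 + ah_mult h (w ah_x) (w (ah_const p))"
proof -
  have "ah_const (pCons c p) = ah_scal c 1 + ah_mult h ah_x (ah_const p)"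
    by (simp add: ah_x_def ah_scal_def ah_const_def mult_const_left[unfolded ah_const_def] one_pCons)
  thus ?thesis by (simp add: hom_add hom_scal hom_mult hom_1)
qed

lemma hom_const_comp: "w ah_x = ah_const q \<Longrightarrow> w (ah_const p) = ah_const (pcompose p q)"
proof (induction p rule: pCons_induct)
  case 0 then show ?case by (simp add: ah_const_def hom_0)
next
  case (pCons c p)
  then show ?case
    by (simp add: hom_const_pCons pcompose_pCons mult_const_const)
       (simp add: ah_scal_def ah_const_def one_pCons)
qed
end

lemma hom_eq:
  assumes h1: "ahom h w1" and h2: "ahom h w2" and x: "w1 ah_x = w2 ah_x" and y: "w1 ah_y = w2 ah_y"
  shows "w1 = w2"
proof -
  have c: "w1 (ah_const p) = w2 (ah_const p)" for p
  proof (induction p rule: pCons_induct)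
    case 0 then show ?case using hom_0[OF h1] hom_0[OF h2] by (simp add: ah_const_def)
  next
    case (pCons c p)
    then show ?case by (simp add: hom_const_pCons[OF h1] hom_const_pCons[OF h2] x)
  qed
  have "w1 a = w2 a" for a
  proof (induction a rule: pCons_induct)
    case 0 then show ?case using hom_0[OF h1] hom_0[OF h2] by simp
  next
    case (pCons c a)
    then show ?case by (simp add: pCons_split[where h=h] hom_add[OF h1] hom_add[OF h2]
          hom_mult[OF h1] hom_mult[OF h2] c y)
  qed
  thus ?thesis by blast
qed

lemma ahom_id: "ahom h id" by (simp add: ahom_def)
lemma ahom_comp: "ahom h w1 \<Longrightarrow> ahom h w2 \<Longrightarrow> ahom h (w1 \<circ> w2)"
  by (simp add: ahom_def)
lemma ahom_inv: assumes "bij w" "ahom h w" shows "ahom h (inv_into UNIV w)"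
proof -
  have ww: "w (inv_into UNIV w a) = a" for a using assms(1) by (simp add: bij_is_surj surj_f_inv_f)
  have iw: "inv_into UNIV w (w a) = a" for a using assms(1) by (simp add: bij_is_inj inv_f_f)
  show ?thesis unfolding ahom_def
  proof (intro conjI allI)
    show "inv_into UNIV w 1 = 1" using hom_1[OF assms(2)] iw by metis
    show "inv_into UNIV w (a + b) = inv_into UNIV w a + inv_into UNIV w b" for a b
      by (metis hom_add[OF assms(2)] ww iw)
    show "inv_into UNIV w (ah_scal c a) = ah_scal c (inv_into UNIV w a)" for c a
      by (metis hom_scal[OF assms(2)] ww iw)
    show "inv_into UNIV w (ah_mult h a b) = ah_mult h (inv_into UNIV w a) (inv_into UNIV w b)" for a b
      by (metis hom_mult[OF assms(2)] ww iw)
  qed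
qed
lemma aut_inv: "is_aut h w \<Longrightarrow> is_aut h (inv_into UNIV w)"
  by (simp add: is_aut_iff ahom_inv bij_imp_bij_inv)
lemma aut_comp: "is_aut h w1 \<Longrightarrow> is_aut h w2 \<Longrightarrow> is_aut h (w1 \<circ> w2)"
  by (simp add: is_aut_iff ahom_comp bij_comp)
lemma aut_id: "is_aut h id" by (simp add: is_aut_iff ahom_id)

locale thet =
  fixes h :: "'a::field poly" and E :: "'a poly \<Rightarrow> 'a poly poly" and Y :: "'a poly poly"
  assumes E_add: "E (p + q) = E p + E q" and E_mult: "E (p * q) = ah_mult h (E p) (E q)"
    and E_one: "E 1 = 1" and E_smult: "E (smult c p) = ah_scal c (E p)"
    and YE: "ah_mult h Y (E p) = ah_mult h (E p) Y + E (ah_delta h p)"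
begin

definition ypow where "ypow i = ((\<lambda>b. ah_mult h Y b) ^^ i) 1"
definition Th where "Th a = (\<Sum>i\<le>degree a. ah_mult h (E (coeff a i)) (ypow i))"

lemma ypow_Suc: "ypow (Suc i) = ah_mult h Y (ypow i)" by (simp add: ypow_def)
lemma ypow_0: "ypow 0 = 1" by (simp add: ypow_def)

lemma E_0: "E 0 = 0" using E_add[of 0 0] by (metis add_cancel_right_right add_0)

lemma Th_le: "degree a \<le> N \<Longrightarrow> Th a = (\<Sum>i\<le>N. ah_mult h (E (coeff a i)) (ypow i))"
  unfolding Th_def by (rule sum.mono_neutral_left) (auto simp: coeff_eq_0 E_0)

lemma Th_add: "Th (a + b) = Th a + Th b"
proof -
  let ?N = "max (degree a) (degree b)"
  have "degree (a + b) \<le> ?N" by (rule degree_add_le_max)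
  thus ?thesis by (simp add: Th_le[of _ ?N] E_add mult_add_left sum.distrib)
qed
lemma Th_0: "Th 0 = 0" by (simp add: Th_def E_0)
lemma Th_sum: "Th (sum f A) = (\<Sum>i\<in>A. Th (f i))"
  by (induction A rule: infinite_finite_induct) (auto simp: Th_0 Th_add)

lemma Th_monom: "Th (monom p n) = ah_mult h (E p) (ypow n)"
proof -
  have "Th (monom p n) = (\<Sum>k\<le>n. ah_mult h (E (coeff (monom p n) k)) (ypow k))"
    by (rule Th_le) (simp add: degree_monom_le)
  also have "\<dots> = (\<Sum>k\<in>{n}. ah_mult h (E (coeff (monom p n) k)) (ypow k))"
    by (rule sum.mono_neutral_right) (auto simp: coeff_monom E_0)
  finally show ?thesis by simp
qed

lemma Th_smult: "Th (smult p a) = ah_mult h (E p) (Th a)"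
proof -
  have "degree (smult p a) \<le> degree a" by (rule degree_smult_le)
  hence "Th (smult p a) = (\<Sum>i\<le>degree a. ah_mult h (E (p * coeff a i)) (ypow i))"
    by (simp add: Th_le[of _ "degree a"])
  also have "\<dots> = ah_mult h (E p) (Th a)"
    by (simp add: Th_def E_mult mult_assoc mult_sum_right)
  finally show ?thesis .
qed

lemma Th_scal: "Th (ah_scal c a) = ah_scal c (Th a)"
proof -
  have "E [:c:] = ah_scal c 1" using E_smult[of c 1] E_one by simp
  thus ?thesis by (simp add: ah_scal_def[of c a] Th_smult mult_scal_left)
qed

lemma Th_Ly: "Th (Ly h c) = ah_mult h Y (Th c)"
proof -
  have "Th (Ly h c) = Th (Ly h (\<Sum>j\<le>degree c. monom (coeff c j) j))"
    by (simp add: poly_as_sum_of_monoms)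
  also have "\<dots> = (\<Sum>j\<le>degree c. ah_mult h (E (coeff c j)) (ypow (Suc j))
                   + ah_mult h (E (ah_delta h (coeff c j))) (ypow j))"
    by (simp add: Ly_sum Ly_monom Th_sum Th_add Th_monom)
  also have "\<dots> = (\<Sum>j\<le>degree c. ah_mult h (ah_mult h Y (E (coeff c j))) (ypow j))"
    by (simp add: YE mult_add_left mult_assoc ypow_Suc)
  also have "\<dots> = ah_mult h Y (Th c)"
    by (simp add: Th_def mult_sum_right mult_assoc)
  finally show ?thesis .
qed

lemma Th_Lpow: "Th ((Ly h ^^ i) c) = ah_mult h (ypow i) (Th c)"
  by (induction i) (auto simp: Th_Ly ypow_0 ypow_Suc mult_assoc)

lemma Th_mult: "Th (ah_mult h a b) = ah_mult h (Th a) (Th b)"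
proof -
  have "Th (ah_mult h a b) = (\<Sum>i\<le>degree a. ah_mult h (E (coeff a i)) (ah_mult h (ypow i) (Th b)))"
    by (simp add: mult_op Th_sum Th_smult Th_Lpow)
  also have "\<dots> = ah_mult h (Th a) (Th b)"
    by (simp add: Th_def mult_sum_left mult_assoc)
  finally show ?thesis .
qed

lemma Th_1: "Th 1 = 1" by (simp add: Th_def E_one ypow_0)

lemma Th_hom: "ahom h Th"
  by (simp add: ahom_def Th_1 Th_add Th_scal Th_mult)

lemma Th_x: "Th ah_x = E [:0, 1:]"
  by (simp add: ah_x_def Th_monom[of _ 0, unfolded monom_0] ypow_0)
lemma Th_y: "Th ah_y = Y"
  by (simp add: ah_y_def Th_monom E_one ypow_Suc ypow_0)
end

lemma Ly_const: "Ly h (ah_const p) = monom p 1 + ah_const (ah_delta h p)"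
  by (simp add: const_monom Ly_monom)

lemma thet_phi: "thet h ah_const (ah_y + ah_const f)"
proof
  show "ah_const (p + q) = ah_const p + ah_const q" for p q by (simp add: ah_const_def)
  show "ah_const (p * q) = ah_mult h (ah_const p) (ah_const q)" for p q by (simp add: mult_const_const)
  show "ah_const 1 = 1" by (simp add: ah_const_def one_pCons)
  show "ah_const (smult c p) = ah_scal c (ah_const p)" for c p by (simp add: ah_const_def ah_scal_def)
  show "ah_mult h (ah_y + ah_const f) (ah_const p) = ah_mult h (ah_const p) (ah_y + ah_const f) + ah_const (ah_delta h p)" for p
    by (simp add: mult_add_left mult_add_right mult_y_left Ly_const mult_const_const)
       (simp add: mult_const_left ah_y_def smult_monom mult.commute)
qed

definition phim :: "'a::field poly \<Rightarrow> 'a poly \<Rightarrow> 'a poly poly \<Rightarrow> 'a poly poly" where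
  "phim h f = thet.Th h ah_const (ah_y + ah_const f)"

lemma phim_hom: "ahom h (phim h f)"
  unfolding phim_def by (rule thet.Th_hom[OF thet_phi])
lemma phim_x: "phim h f ah_x = ah_x"
  unfolding phim_def by (simp add: thet.Th_x[OF thet_phi]) (simp add: ah_x_def ah_const_def)
lemma phim_y: "phim h f ah_y = ah_y + ah_const f"
  unfolding phim_def by (simp add: thet.Th_y[OF thet_phi])
lemma x_const: "ah_x = ah_const [:0, 1:]" by (simp add: ah_x_def ah_const_def)
lemma ah_const_add: "ah_const (p + q) = ah_const p + ah_const q" by (simp add: ah_const_def)
lemma phim_const: "phim h f (ah_const p) = ah_const p"
proof -
  have "phim h f ah_x = ah_const [:0,1:]" using phim_x x_const by metis
  from hom_const_comp[OF phim_hom this] show ?thesis by simp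
qed
lemma phim_comp: "phim h f \<circ> phim h g = phim h (f + g)"
  by (rule hom_eq[OF ahom_comp[OF phim_hom phim_hom] phim_hom])
     (simp_all add: phim_x phim_y hom_add[OF phim_hom] phim_const ah_const_add)
lemma phim_0: "phim h 0 = id"
  by (rule hom_eq[OF phim_hom ahom_id]) (simp_all add: phim_x phim_y ah_const_def)
lemma phim_aut: "is_aut h (phim h f)"
proof -
  have "phim h f \<circ> phim h (-f) = id" "phim h (-f) \<circ> phim h f = id"
    by (simp_all add: phim_comp phim_0)
  hence "bij (phim h f)" by (metis o_bij)
  thus ?thesis by (simp add: is_aut_iff phim_hom)
qed
lemma phi_eq: "phi h f = phim h f"
  unfolding phi_def
proof (rule the_equality)
  show "is_aut h (phim h f) \<and> phim h f ah_x = ah_x \<and> phim h f ah_y = ah_y + ah_const f"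
    by (simp add: phim_aut phim_x phim_y)
  fix w assume A: "is_aut h w \<and> w ah_x = ah_x \<and> w ah_y = ah_y + ah_const f"
  hence A1: "ahom h w" and A2: "w ah_x = ah_x" and A3: "w ah_y = ah_y + ah_const f"
    by (simp_all only: is_aut_iff)
  show "w = phim h f"
  proof (rule hom_eq[OF A1 phim_hom])
    show "w ah_x = phim h f ah_x" by (simp only: A2 phim_x)
    show "w ah_y = phim h f ah_y" by (simp only: A3 phim_y)
  qed
qed

lemma delta_comp:
  assumes "pcompose h [:\<beta>, \<alpha>:] = smult (\<alpha> ^ degree h) h" "degree h \<ge> 1"
  shows "smult (\<alpha> ^ (degree h - 1)) (ah_delta h (pcompose p [:\<beta>, \<alpha>:])) = pcompose (ah_delta h p) [:\<beta>, \<alpha>:]"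
proof -
  have a: "\<alpha> ^ (degree h - 1) * \<alpha> = \<alpha> ^ degree h" using assms(2) by (cases "degree h") (simp_all add: mult.commute)
  have m: "q * [:\<alpha>:] = smult \<alpha> q" for q :: "'a poly" by simp
  show ?thesis
    by (simp add: ah_delta_def pderiv_pcompose pcompose_mult assms(1) pderiv_pCons mult.assoc m a[symmetric])
qed

lemma scal_scal: "ah_scal c (ah_scal d a) = ah_scal (c * d) a" by (simp add: ah_scal_def mult.commute)

lemma thet_tau:
  assumes P: "(\<alpha>, \<beta>) \<in> Pset h" and d: "degree h \<ge> 1"
  shows "thet h (\<lambda>p. ah_const (pcompose p [:\<beta>, \<alpha>:])) (ah_scal (\<alpha> ^ (degree h - 1)) ah_y)"
proof
  have hc: "pcompose h [:\<beta>, \<alpha>:] = smult (\<alpha> ^ degree h) h" using P by (simp add: Pset_def)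
  show "ah_const (pcompose (p + q) [:\<beta>, \<alpha>:]) = ah_const (pcompose p [:\<beta>, \<alpha>:]) + ah_const (pcompose q [:\<beta>, \<alpha>:])" for p q
    by (simp add: ah_const_def pcompose_add)
  show "ah_const (pcompose (p * q) [:\<beta>, \<alpha>:]) = ah_mult h (ah_const (pcompose p [:\<beta>, \<alpha>:])) (ah_const (pcompose q [:\<beta>, \<alpha>:]))" for p q
    by (simp add: mult_const_const pcompose_mult)
  show "ah_const (pcompose 1 [:\<beta>, \<alpha>:]) = 1" by (simp add: ah_const_def one_pCons pcompose_1)
  show "ah_const (pcompose (smult c p) [:\<beta>, \<alpha>:]) = ah_scal c (ah_const (pcompose p [:\<beta>, \<alpha>:]))" for c p
    by (simp add: ah_const_def ah_scal_def pcompose_smult)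
  fix p
  let ?q = "pcompose p [:\<beta>, \<alpha>:]" and ?l = "\<alpha> ^ (degree h - 1)"
  have dc: "ah_scal ?l (ah_const (ah_delta h ?q)) = ah_const (pcompose (ah_delta h p) [:\<beta>, \<alpha>:])"
    using delta_comp[OF hc d, of p] by (simp add: ah_scal_def ah_const_def)
  have "ah_mult h (ah_scal ?l ah_y) (ah_const ?q) = ah_scal ?l (monom ?q 1) + ah_scal ?l (ah_const (ah_delta h ?q))"
    by (simp only: mult_scal_left mult_y_left Ly_const) (simp add: ah_scal_def smult_add_right)
  also have "ah_scal ?l (monom ?q 1) = ah_mult h (ah_const ?q) (ah_scal ?l ah_y)"
    by (simp add: mult_const_left ah_scal_def ah_y_def smult_monom mult.commute)
  finally show "ah_mult h (ah_scal ?l ah_y) (ah_const ?q) = ah_mult h (ah_const ?q) (ah_scal ?l ah_y)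
       + ah_const (pcompose (ah_delta h p) [:\<beta>, \<alpha>:])" using dc by simp
qed

definition taum :: "'a::field poly \<Rightarrow> 'a \<Rightarrow> 'a \<Rightarrow> 'a poly poly \<Rightarrow> 'a poly poly" where
  "taum h \<alpha> \<beta> = thet.Th h (\<lambda>p. ah_const (pcompose p [:\<beta>, \<alpha>:])) (ah_scal (\<alpha> ^ (degree h - 1)) ah_y)"

context fixes h :: "'a::field poly" and \<alpha> \<beta> assumes P: "(\<alpha>, \<beta>) \<in> Pset h" and d: "degree h \<ge> 1"
begin
lemma taum_hom: "ahom h (taum h \<alpha> \<beta>)"
  unfolding taum_def by (rule thet.Th_hom[OF thet_tau[OF P d]])
lemma taum_x: "taum h \<alpha> \<beta> ah_x = ah_const [:\<beta>, \<alpha>:]"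
  unfolding taum_def thet.Th_x[OF thet_tau[OF P d]] by (simp add: pcompose_pCons)
lemma taum_y: "taum h \<alpha> \<beta> ah_y = ah_scal (\<alpha> ^ (degree h - 1)) ah_y"
  unfolding taum_def by (rule thet.Th_y[OF thet_tau[OF P d]])
lemma taum_const: "taum h \<alpha> \<beta> (ah_const p) = ah_const (pcompose p [:\<beta>, \<alpha>:])"
  by (rule hom_const_comp[OF taum_hom taum_x])
end

lemma Pset_mult: "(\<alpha>, \<beta>) \<in> Pset h \<Longrightarrow> (\<alpha>', \<beta>') \<in> Pset h \<Longrightarrow> (\<alpha> * \<alpha>', \<beta>' + \<alpha>' * \<beta>) \<in> Pset h"
proof -
  assume a: "(\<alpha>, \<beta>) \<in> Pset h" and b: "(\<alpha>', \<beta>') \<in> Pset h"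
  have "[:\<beta>' + \<alpha>' * \<beta>, \<alpha> * \<alpha>':] = pcompose [:\<beta>', \<alpha>':] [:\<beta>, \<alpha>:]"
    by (simp add: pcompose_pCons algebra_simps)
  hence "pcompose h [:\<beta>' + \<alpha>' * \<beta>, \<alpha> * \<alpha>':] = smult ((\<alpha> * \<alpha>') ^ degree h) h"
    using a b by (simp add: Pset_def pcompose_assoc pcompose_smult power_mult_distrib mult.commute)
  thus ?thesis using a b by (simp add: Pset_def)
qed

lemma Pset_inv: assumes a: "(\<alpha>, \<beta>) \<in> Pset h" shows "(1 / \<alpha>, - (\<beta> / \<alpha>)) \<in> Pset h"
proof -
  have a0: "\<alpha> \<noteq> 0" and hc: "pcompose h [:\<beta>, \<alpha>:] = smult (\<alpha> ^ degree h) h" using a by (auto simp: Pset_def)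
  have "pcompose [:\<beta>, \<alpha>:] [:- (\<beta> / \<alpha>), 1 / \<alpha>:] = [:0, 1:]"
    using a0 by (simp add: pcompose_pCons)
  hence "h = pcompose h (pcompose [:\<beta>, \<alpha>:] [:- (\<beta> / \<alpha>), 1 / \<alpha>:])" by (simp only: pcompose_idR)
  also have "\<dots> = pcompose (pcompose h [:\<beta>, \<alpha>:]) [:- (\<beta> / \<alpha>), 1 / \<alpha>:]" by (rule pcompose_assoc)
  also have "\<dots> = smult (\<alpha> ^ degree h) (pcompose h [:- (\<beta> / \<alpha>), 1 / \<alpha>:])" by (simp only: hc pcompose_smult)
  finally have "h = smult (\<alpha> ^ degree h) (pcompose h [:- (\<beta> / \<alpha>), 1 / \<alpha>:])" .
  hence "smult ((1 / \<alpha>) ^ degree h) h = smult ((1 / \<alpha>) ^ degree h) (smult (\<alpha> ^ degree h) (pcompose h [:- (\<beta> / \<alpha>), 1 / \<alpha>:]))"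
    by (rule arg_cong[where f="smult ((1 / \<alpha>) ^ degree h)"])
  also have "\<dots> = smult ((1 / \<alpha>) ^ degree h * \<alpha> ^ degree h) (pcompose h [:- (\<beta> / \<alpha>), 1 / \<alpha>:])"
    by (simp only: smult_smult)
  also have "(1 / \<alpha>) ^ degree h * \<alpha> ^ degree h = 1" using a0 by (simp add: power_one_over)
  finally have "pcompose h [:- (\<beta> / \<alpha>), 1 / \<alpha>:] = smult ((1 / \<alpha>) ^ degree h) h" by simp
  thus ?thesis using a0 by (simp add: Pset_def)
qed

lemma Pset_one: "(1, 0) \<in> Pset h" by (simp add: Pset_def)

lemma taum_comp:
  assumes a: "(\<alpha>, \<beta>) \<in> Pset h" and b: "(\<alpha>', \<beta>') \<in> Pset h" and d: "degree h \<ge> 1"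
  shows "taum h \<alpha> \<beta> \<circ> taum h \<alpha>' \<beta>' = taum h (\<alpha> * \<alpha>') (\<beta>' + \<alpha>' * \<beta>)"
proof (rule hom_eq[OF ahom_comp[OF taum_hom[OF a d] taum_hom[OF b d]] taum_hom[OF Pset_mult[OF a b] d]])
  show "(taum h \<alpha> \<beta> \<circ> taum h \<alpha>' \<beta>') ah_x = taum h (\<alpha> * \<alpha>') (\<beta>' + \<alpha>' * \<beta>) ah_x"
    by (simp add: taum_x[OF b d] taum_x[OF Pset_mult[OF a b] d] taum_const[OF a d] pcompose_pCons algebra_simps)
  show "(taum h \<alpha> \<beta> \<circ> taum h \<alpha>' \<beta>') ah_y = taum h (\<alpha> * \<alpha>') (\<beta>' + \<alpha>' * \<beta>) ah_y"
    by (simp add: taum_y[OF b d] taum_y[OF Pset_mult[OF a b] d] taum_y[OF a d] hom_scal[OF taum_hom[OF a d]]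
        scal_scal power_mult_distrib mult.commute)
qed

lemma taum_one: assumes d: "degree h \<ge> 1" shows "taum h 1 0 = id"
  by (rule hom_eq[OF taum_hom[OF Pset_one d] ahom_id])
     (simp_all only: taum_x[OF Pset_one d] taum_y[OF Pset_one d], simp_all add: x_const ah_scal_def one_pCons[symmetric])

lemma taum_inv: assumes a: "(\<alpha>, \<beta>) \<in> Pset h" and d: "degree h \<ge> 1"
  shows "taum h \<alpha> \<beta> \<circ> taum h (1/\<alpha>) (- (\<beta> / \<alpha>)) = id \<and> taum h (1/\<alpha>) (- (\<beta> / \<alpha>)) \<circ> taum h \<alpha> \<beta> = id"
proof -
  have a0: "\<alpha> \<noteq> 0" using a by (simp add: Pset_def)
  have "taum h \<alpha> \<beta> \<circ> taum h (1/\<alpha>) (- (\<beta> / \<alpha>)) = taum h (\<alpha> * (1/\<alpha>)) (- (\<beta> / \<alpha>) + 1/\<alpha> * \<beta>)"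
    by (rule taum_comp[OF a Pset_inv[OF a] d])
  also have "\<dots> = id" using a0 by (simp add: taum_one[OF d])
  finally have 1: "taum h \<alpha> \<beta> \<circ> taum h (1/\<alpha>) (- (\<beta> / \<alpha>)) = id" .
  have "taum h (1/\<alpha>) (- (\<beta> / \<alpha>)) \<circ> taum h \<alpha> \<beta> = taum h (1/\<alpha> * \<alpha>) (\<beta> + \<alpha> * (- (\<beta> / \<alpha>)))"
    by (rule taum_comp[OF Pset_inv[OF a] a d])
  also have "\<dots> = id" using a0 by (simp add: taum_one[OF d])
  finally have 2: "taum h (1/\<alpha>) (- (\<beta> / \<alpha>)) \<circ> taum h \<alpha> \<beta> = id" .
  show ?thesis using 1 2 by blast
qed

lemma taum_aut: assumes a: "(\<alpha>, \<beta>) \<in> Pset h" and d: "degree h \<ge> 1" shows "is_aut h (taum h \<alpha> \<beta>)"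
proof -
  have "bij (taum h \<alpha> \<beta>)" using taum_inv[OF a d] by (metis o_bij)
  thus ?thesis by (simp add: is_aut_iff taum_hom[OF a d])
qed

lemma tau_eq: assumes a: "(\<alpha>, \<beta>) \<in> Pset h" and d: "degree h \<ge> 1" shows "tau h \<alpha> \<beta> = taum h \<alpha> \<beta>"
  unfolding tau_def
proof (rule the_equality)
  show "is_aut h (taum h \<alpha> \<beta>) \<and> taum h \<alpha> \<beta> ah_x = ah_const [:\<beta>, \<alpha>:] \<and> taum h \<alpha> \<beta> ah_y = ah_scal (\<alpha> ^ (degree h - 1)) ah_y"
    by (simp add: taum_aut[OF a d] taum_x[OF a d] taum_y[OF a d])
  fix w assume A: "is_aut h w \<and> w ah_x = ah_const [:\<beta>, \<alpha>:] \<and> w ah_y = ah_scal (\<alpha> ^ (degree h - 1)) ah_y"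
  hence A1: "ahom h w" and A2: "w ah_x = ah_const [:\<beta>, \<alpha>:]" and A3: "w ah_y = ah_scal (\<alpha> ^ (degree h - 1)) ah_y"
    by (simp_all only: is_aut_iff)
  show "w = taum h \<alpha> \<beta>"
  proof (rule hom_eq[OF A1 taum_hom[OF a d]])
    show "w ah_x = taum h \<alpha> \<beta> ah_x" by (simp only: A2 taum_x[OF a d])
    show "w ah_y = taum h \<alpha> \<beta> ah_y" by (simp only: A3 taum_y[OF a d])
  qed
qed

lemma H_comm: "ah_const h = ah_mult h ah_y ah_x - ah_mult h ah_x ah_y"
proof -
  have "ah_mult h ah_y ah_x = monom [:0, 1:] 1 + ah_const h"
    by (simp add: mult_y_left x_const Ly_const ah_delta_def pderiv_pCons)
  moreover have "ah_mult h ah_x ah_y = monom [:0, 1:] 1"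
    by (simp add: mult_y_right ah_x_def monom_Suc monom_0)
  ultimately show ?thesis by simp
qed

lemma aut_inj_nz: assumes "is_aut h w" "a \<noteq> 0" shows "w a \<noteq> 0"
proof
  assume "w a = 0"
  moreover have "w 0 = 0" using assms(1) hom_0[of h w] by (simp add: is_aut_iff)
  moreover have "inj w" using assms(1) by (simp add: is_aut_iff bij_is_inj)
  ultimately have "a = 0" by (metis injD)
  with assms(2) show False by simp
qed

lemma hom_deg_const:
  assumes w: "is_aut h w" and m: "degree (w ah_x) > 0"
  shows "degree (w (ah_const p)) = degree (w ah_x) * degree p"
proof (induction p rule: pCons_induct)
  case 0 then show ?case using w hom_0[of h w] by (simp add: ah_const_def is_aut_iff)
next
  case (pCons c p)
  have hw: "ahom h w" using w by (simp add: is_aut_iff)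
  show ?case
  proof (cases "p = 0")
    case True
    then show ?thesis using hom_const_pCons[OF hw, of c p] by (simp add: ah_const_def hom_0[OF hw] ah_scal_def)
  next
    case False
    have nz1: "w ah_x \<noteq> 0" using m by auto
    have nz2: "w (ah_const p) \<noteq> 0" using aut_inj_nz[OF w] False by (simp add: ah_const_def)
    have dd: "degree (ah_mult h (w ah_x) (w (ah_const p))) = degree (w ah_x) + degree (w ah_x) * degree p"
      using mult_deg[OF nz1 nz2, of h] pCons.IH by simp
    have "degree (ah_scal c 1) = 0" by (simp add: ah_scal_def)
    hence "degree (ah_scal c 1 + ah_mult h (w ah_x) (w (ah_const p))) = degree (w ah_x) + degree (w ah_x) * degree p"
      using dd m by (subst degree_add_eq_right) auto
    then show ?thesis using hom_const_pCons[OF hw, of c p] False by (simp add: degree_pCons_eq)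
  qed
qed

lemma deg1_form: "degree (q::'a::zero poly) = 1 \<Longrightarrow> q = [:coeff q 0, coeff q 1:]"
  by (rule poly_eqI) (auto simp: coeff_pCons coeff_eq_0 split: nat.split)

lemma aut_x:
  assumes w: "is_aut h w" and d: "degree h \<ge> 1"
  shows "\<exists>\<alpha> \<beta>. (\<alpha>, \<beta>) \<in> Pset h \<and> w ah_x = ah_const [:\<beta>, \<alpha>:]"
proof -
  have hw: "ahom h w" using w by (simp add: is_aut_iff)
  let ?v = "inv_into UNIV w"
  have v: "is_aut h ?v" using aut_inv[OF w] .
  have hv: "ahom h ?v" using v by (simp add: is_aut_iff)
  have h0: "h \<noteq> 0" using d by auto
  have comm: "\<exists>u. z (ah_const h) = smult h u" if "ahom h z" for z
  proof -
    have "z (ah_const h) = ah_mult h (z ah_y) (z ah_x) - ah_mult h (z ah_x) (z ah_y)"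
      by (subst H_comm) (simp add: hom_diff[OF that] hom_mult[OF that])
    thus ?thesis using comm_mod by metis
  qed
  obtain U where U: "w (ah_const h) = smult h U" using comm[OF hw] by blast
  obtain V where V: "?v (ah_const h) = smult h V" using comm[OF hv] by blast
  have ww: "w (?v a) = a" for a using w by (simp add: is_aut_iff bij_is_surj surj_f_inv_f)
  have "ah_const h = w (?v (ah_const h))" by (simp add: ww)
  also have "\<dots> = w (ah_mult h (ah_const h) V)" by (simp add: V mult_const_left)
  also have "\<dots> = smult h (ah_mult h U (w V))" by (simp add: hom_mult[OF hw] U mult_smult_left)
  finally have "smult h (ah_mult h U (w V) - 1) = 0" by (simp add: smult_diff_right ah_const_def)
  hence UW: "ah_mult h U (w V) = 1" using h0 by simp
  hence U0: "U \<noteq> 0" and W0: "w V \<noteq> 0" by auto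
  from mult_deg[OF U0 W0, of h] UW have dU: "degree U = 0" and lc: "lead_coeff U * lead_coeff (w V) = 1" by auto
  have "is_unit (lead_coeff U)" by (rule dvdI[of 1 "lead_coeff U" "lead_coeff (w V)"]) (simp add: lc)
  moreover have "lead_coeff U \<noteq> 0" using U0 by simp
  ultimately have dl: "degree (lead_coeff U) = 0" using is_unit_iff_degree[of "lead_coeff U"] by simp
  define c where "c = coeff (lead_coeff U) 0"
  have c: "lead_coeff U = [:c:]" using degree_0_id[OF dl] by (simp add: c_def)
  have c0: "c \<noteq> 0" using lc c by auto
  have Uc: "U = [:[:c:]:]" using degree_0_id[OF dU] c dU by simp
  have wH: "w (ah_const h) = ah_const (smult c h)"
    using U by (simp add: Uc ah_const_def mult.commute[of h])
  have xd: "degree (w ah_x) = 0"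
  proof (rule ccontr)
    assume "degree (w ah_x) \<noteq> 0"
    hence "degree (w (ah_const h)) = degree (w ah_x) * degree h" using hom_deg_const[OF w] by auto
    moreover have "degree (w ah_x) * degree h > 0" using d \<open>degree (w ah_x) \<noteq> 0\<close> by simp
    ultimately show False using wH by (simp add: ah_const_def)
  qed
  define q where "q = coeff (w ah_x) 0"
  have wx: "w ah_x = ah_const q" using xd by (simp add: q_def ah_const_def degree_0_id)
  have hq: "pcompose h q = smult c h"
    using hom_const_comp[OF hw wx, of h] wH by (simp add: ah_const_def)
  hence "degree (pcompose h q) = degree h" using c0 by simp
  hence "degree h * degree q = degree h" by (simp only: degree_pcompose)
  hence q1: "degree q = 1" using d by simp
  define \<alpha> \<beta> where "\<alpha> = coeff q 1" and "\<beta> = coeff q 0"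
  have qf: "q = [:\<beta>, \<alpha>:]" using deg1_form[OF q1] by (simp add: \<alpha>_def \<beta>_def)
  have "q \<noteq> 0" using q1 by auto
  hence "lead_coeff q \<noteq> 0" by simp
  hence a0: "\<alpha> \<noteq> 0" using q1 by (simp add: \<alpha>_def)
  have "lead_coeff (pcompose h q) = lead_coeff h * \<alpha> ^ degree h"
    using q1 by (simp add: lead_coeff_comp \<alpha>_def)
  hence "c * lead_coeff h = lead_coeff h * \<alpha> ^ degree h" using hq c0 by simp
  hence "c = \<alpha> ^ degree h" using h0 c0 by simp
  hence "(\<alpha>, \<beta>) \<in> Pset h" using hq qf a0 by (simp add: Pset_def)
  thus ?thesis using wx qf by blast
qed

lemma aut_fix_x:
  assumes r: "is_aut h r" and rx: "r ah_x = ah_x" and d: "degree h \<ge> 1"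
  shows "\<exists>g. r = phim h g"
proof -
  have hr: "ahom h r" using r by (simp add: is_aut_iff)
  have h0: "h \<noteq> 0" using d by auto
  let ?Z = "r ah_y"
  have Z0: "?Z \<noteq> 0" using aut_inj_nz[OF r] by (simp add: ah_y_def)
  have rc: "r (ah_const p) = ah_const p" for p
    using hom_const_comp[OF hr, of "[:0,1:]" p] rx by (simp add: x_const)
  have deg: "degree (r a) = degree ?Z * degree a" for a
  proof (induction a rule: pCons_induct)
    case 0 then show ?case by (simp add: hom_0[OF hr])
  next
    case (pCons c a)
    show ?case
    proof (cases "a = 0")
      case True then show ?thesis using rc[of c] by (simp add: ah_const_def)
    next
      case False
      have ra: "r a \<noteq> 0" using aut_inj_nz[OF r False] .
      have e: "r (pCons c a) = ah_const c + ah_mult h (r a) ?Z"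
        by (simp add: pCons_split[where h=h] hom_add[OF hr] hom_mult[OF hr] rc)
      have dm: "degree (ah_mult h (r a) ?Z) = degree ?Z * degree a + degree ?Z"
        using mult_deg[OF ra Z0, of h] pCons.IH by simp
      show ?thesis
      proof (cases "degree ?Z = 0")
        case True
        have "degree (r (pCons c a)) \<le> max (degree (ah_const c)) (degree (ah_mult h (r a) ?Z))"
          unfolding e by (rule degree_add_le_max)
        then show ?thesis using True dm by (simp add: ah_const_def)
      next
        case False
        have "degree (r (pCons c a)) = degree ?Z * degree a + degree ?Z"
          unfolding e using dm False by (subst degree_add_eq_right) (auto simp: ah_const_def)
        then show ?thesis using \<open>a \<noteq> 0\<close> by (simp add: degree_pCons_eq)
      qed
    qed
  qed
  obtain a where "r a = ah_y" using r by (metis is_aut_iff bij_is_surj surjD)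
  hence "degree ?Z * degree a = 1" using deg[of a] by (simp add: ah_y_def degree_monom_eq)
  hence Z1: "degree ?Z = 1" by simp
  define g u where "g = coeff ?Z 0" and "u = coeff ?Z 1"
  have Zf: "?Z = [:g, u:]" using deg1_form[OF Z1] by (simp add: g_def u_def)
  have Zs: "?Z = ah_const g + ah_mult h (ah_const u) ah_y"
    using Zf pCons_split[of g "[:u:]" h] by (simp add: ah_const_def)
  have cx: "ah_mult h ah_x (ah_const v) = ah_mult h (ah_const v) ah_x" for v
    by (simp add: x_const mult_const_const mult.commute)
  have "ah_const h = r (ah_const h)" by (simp add: rc)
  also have "\<dots> = ah_mult h ?Z ah_x - ah_mult h ah_x ?Z"
    by (subst H_comm) (simp add: hom_diff[OF hr] hom_mult[OF hr] rx)
  also have "\<dots> = ah_mult h (ah_const u) (ah_mult h ah_y ah_x - ah_mult h ah_x ah_y)"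
  proof -
    have e1: "ah_mult h ?Z ah_x = ah_mult h (ah_const g) ah_x + ah_mult h (ah_const u) (ah_mult h ah_y ah_x)"
      unfolding Zs by (simp only: mult_add_left mult_assoc)
    have "ah_mult h ah_x ?Z = ah_mult h ah_x (ah_const g) + ah_mult h (ah_mult h ah_x (ah_const u)) ah_y"
      unfolding Zs by (simp only: mult_add_right mult_assoc)
    also have "\<dots> = ah_mult h (ah_const g) ah_x + ah_mult h (ah_mult h (ah_const u) ah_x) ah_y"
      by (simp only: cx)
    also have "\<dots> = ah_mult h (ah_const g) ah_x + ah_mult h (ah_const u) (ah_mult h ah_x ah_y)"
      by (simp only: mult_assoc)
    finally have e2: "ah_mult h ah_x ?Z = ah_mult h (ah_const g) ah_x + ah_mult h (ah_const u) (ah_mult h ah_x ah_y)" .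
    show ?thesis unfolding e1 e2 mult_diff_right by simp
  qed
  also have "\<dots> = ah_const (u * h)" by (simp add: H_comm[symmetric] mult_const_const)
  finally have "(u - 1) * h = 0" by (simp add: ah_const_def algebra_simps)
  hence u1: "u = 1" using h0 by simp
  have "?Z = ah_y + ah_const g" using Zs u1 by (simp add: ah_const_def one_pCons[symmetric] add.commute)
  hence "r = phim h g"
    by (intro hom_eq[OF hr phim_hom]) (simp_all add: rx phim_x phim_y)
  thus ?thesis by blast
qed

lemma part_i:
  assumes w: "is_aut h w" and d: "degree h \<ge> 1"
  shows "\<exists>\<alpha> \<beta> f. (\<alpha>, \<beta>) \<in> Pset h \<and> w = phi h f \<circ> tau h \<alpha> \<beta>"
proof -
  obtain \<alpha> \<beta> where P: "(\<alpha>, \<beta>) \<in> Pset h" and wx: "w ah_x = ah_const [:\<beta>, \<alpha>:]"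
    using aut_x[OF w d] by blast
  have a0: "\<alpha> \<noteq> 0" using P by (simp add: Pset_def)
  have P': "(1/\<alpha>, - (\<beta> / \<alpha>)) \<in> Pset h" by (rule Pset_inv[OF P])
  let ?t = "taum h (1/\<alpha>) (- (\<beta> / \<alpha>))"
  have r: "is_aut h (w \<circ> ?t)" by (rule aut_comp[OF w taum_aut[OF P' d]])
  have hw: "ahom h w" using w by (simp add: is_aut_iff)
  have "(w \<circ> ?t) ah_x = w (ah_const [:- (\<beta> / \<alpha>), 1/\<alpha>:])" by (simp only: o_apply taum_x[OF P' d])
  also have "\<dots> = ah_const (pcompose [:- (\<beta> / \<alpha>), 1/\<alpha>:] [:\<beta>, \<alpha>:])" by (rule hom_const_comp[OF hw wx])
  also have "pcompose [:- (\<beta> / \<alpha>), 1/\<alpha>:] [:\<beta>, \<alpha>:] = [:0, 1:]" using a0 by (simp add: pcompose_pCons)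
  finally have "(w \<circ> ?t) ah_x = ah_x" by (simp add: x_const)
  then obtain g where g: "w \<circ> ?t = phim h g" using aut_fix_x[OF r _ d] by blast
  have "w = w \<circ> (?t \<circ> taum h \<alpha> \<beta>)" using taum_inv[OF P d] by simp
  also have "\<dots> = phim h g \<circ> taum h \<alpha> \<beta>" by (simp only: o_assoc g)
  finally have "w = phi h g \<circ> tau h \<alpha> \<beta>" by (simp add: phi_eq tau_eq[OF P d])
  thus ?thesis using P by blast
qed

lemma part_ii:
  assumes P: "(\<alpha>, \<beta>) \<in> Pset h" and d: "degree h \<ge> 1"
  shows "tau h \<alpha> \<beta> = phi h f \<longleftrightarrow> \<alpha> = 1 \<and> \<beta> = 0 \<and> f = 0"
proof
  assume E: "tau h \<alpha> \<beta> = phi h f"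
  hence E': "taum h \<alpha> \<beta> = phim h f" by (simp add: phi_eq tau_eq[OF P d])
  have "taum h \<alpha> \<beta> ah_x = phim h f ah_x" using E' by simp
  hence "ah_const [:\<beta>, \<alpha>:] = ah_x" by (simp only: taum_x[OF P d] phim_x)
  hence "ah_const [:\<beta>, \<alpha>:] = ah_const [:0, 1:]" by (simp only: x_const)
  hence ab: "\<alpha> = 1 \<and> \<beta> = 0" by (simp add: ah_const_def)
  have "ah_scal (\<alpha> ^ (degree h - 1)) ah_y = ah_y + ah_const f"
    using arg_cong[OF E', of "\<lambda>w. w ah_y"] by (simp add: taum_y[OF P d] phim_y)
  hence "ah_const f = 0" using ab by (simp add: ah_scal_def one_pCons[symmetric])
  hence "f = 0" by (simp add: ah_const_def)
  with ab show "\<alpha> = 1 \<and> \<beta> = 0 \<and> f = 0" by simp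
next
  assume "\<alpha> = 1 \<and> \<beta> = 0 \<and> f = 0"
  thus "tau h \<alpha> \<beta> = phi h f"
    by (simp add: tau_eq[OF Pset_one d] phi_eq taum_one[OF d] phim_0)
qed

lemma taum_pow:
  assumes P: "(\<alpha>, \<beta>) \<in> Pset h" and d: "degree h \<ge> 1"
  shows "(taum h \<alpha> \<beta> ^^ n) = taum h (\<alpha> ^ n) (\<beta> * (\<Sum>i<n. \<alpha> ^ i))
         \<and> (\<alpha> ^ n, \<beta> * (\<Sum>i<n. \<alpha> ^ i)) \<in> Pset h"
proof (induction n)
  case 0 then show ?case by (simp add: taum_one[OF d] Pset_one)
next
  case (Suc n)
  let ?s = "\<beta> * (\<Sum>i<n. \<alpha> ^ i)"
  have IH1: "taum h \<alpha> \<beta> ^^ n = taum h (\<alpha> ^ n) ?s" and IH2: "(\<alpha> ^ n, ?s) \<in> Pset h" using Suc by auto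
  have e1: "\<alpha> * \<alpha> ^ n = \<alpha> ^ Suc n" by simp
  have e2: "?s + \<alpha> ^ n * \<beta> = \<beta> * (\<Sum>i<Suc n. \<alpha> ^ i)" by (simp add: algebra_simps)
  have "taum h \<alpha> \<beta> ^^ Suc n = taum h \<alpha> \<beta> \<circ> taum h (\<alpha> ^ n) ?s" by (simp add: IH1)
  also have "\<dots> = taum h (\<alpha> * \<alpha> ^ n) (?s + \<alpha> ^ n * \<beta>)" by (rule taum_comp[OF P IH2 d])
  finally show ?case using Pset_mult[OF P IH2] by (simp only: e1 e2)
qed

lemma part_iii:
  assumes P: "(\<alpha>, \<beta>) \<in> Pset h" and d: "degree h \<ge> 1" and a1: "\<alpha> \<noteq> 1" and al: "\<alpha> ^ l = 1"
  shows "tau h \<alpha> \<beta> ^^ l = id"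
proof -
  have "\<alpha> ^ l - 1 = (\<alpha> - 1) * (\<Sum>i<l. \<alpha> ^ i)" by (rule power_diff_1_eq)
  hence "(\<Sum>i<l. \<alpha> ^ i) = 0" using al a1 by simp
  thus ?thesis using taum_pow[OF P d, of l] al by (simp add: tau_eq[OF P d] taum_one[OF d])
qed

lemma aut_linv: assumes "is_aut h x" shows "is_aut h (inv_into UNIV x) \<and> inv_into UNIV x \<circ> x = id"
proof -
  have 1: "is_aut h (inv_into UNIV x)" by (rule aut_inv[OF assms])
  have "inj x" using assms by (simp add: is_aut_iff bij_is_inj)
  hence "inv_into UNIV x \<circ> x = id" by simp
  with 1 show ?thesis by blast
qed

lemma phi_eq': "phi h = phim h" by (rule ext) (rule phi_eq)

lemma Aut_grp: "group (Aut_group h)"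
proof (rule groupI)
  show "\<exists>y\<in>carrier (Aut_group h). y \<otimes>\<^bsub>Aut_group h\<^esub> x = \<one>\<^bsub>Aut_group h\<^esub>"
    if "x \<in> carrier (Aut_group h)" for x
    using that aut_linv[of h x] by (auto simp: Aut_group_def)
qed (auto simp: Aut_group_def aut_comp aut_id o_assoc)

lemma Aut_inv: assumes "is_aut h x" "is_aut h y" "y \<circ> x = id"
  shows "inv\<^bsub>Aut_group h\<^esub> x = y"
  using assms by (intro group.inv_equality[OF Aut_grp]) (simp_all add: Aut_group_def)

lemma phi_range_sub: "subgroup (range (phi h)) (Aut_group h)"
proof (rule group.subgroupI[OF Aut_grp])
  show "range (phi h) \<subseteq> carrier (Aut_group h)" by (auto simp: Aut_group_def phi_eq' phim_aut)
  show "range (phi h) \<noteq> {}" by simp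
  show "inv\<^bsub>Aut_group h\<^esub> a \<in> range (phi h)" if Aa: "a \<in> range (phi h)" for a
  proof -
    obtain f where a: "a = phim h f" using Aa by (auto simp: phi_eq')
    have "inv\<^bsub>Aut_group h\<^esub> a = phim h (-f)"
      unfolding a by (rule Aut_inv) (simp_all add: phim_aut phim_comp phim_0)
    thus ?thesis by (simp add: phi_eq')
  qed
  show "a \<otimes>\<^bsub>Aut_group h\<^esub> b \<in> range (phi h)" if "a \<in> range (phi h)" "b \<in> range (phi h)" for a b
    using that by (auto simp: Aut_group_def phi_eq' phim_comp)
qed

lemma phi_comm: "comm_group ((Aut_group h)\<lparr>carrier := range (phi h)\<rparr>)"
proof (rule comm_groupI)
  show "\<exists>y\<in>carrier ((Aut_group h)\<lparr>carrier := range (phi h)\<rparr>).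
          y \<otimes>\<^bsub>(Aut_group h)\<lparr>carrier := range (phi h)\<rparr>\<^esub> x = \<one>\<^bsub>(Aut_group h)\<lparr>carrier := range (phi h)\<rparr>\<^esub>"
    if Ax: "x \<in> carrier ((Aut_group h)\<lparr>carrier := range (phi h)\<rparr>)" for x
  proof -
    obtain f where x: "x = phim h f" using Ax by (auto simp: phi_eq')
    show ?thesis unfolding x
      by (rule bexI[of _ "phim h (-f)"]) (auto simp: Aut_group_def phi_eq' phim_comp phim_0)
  qed
  show "\<one>\<^bsub>(Aut_group h)\<lparr>carrier := range (phi h)\<rparr>\<^esub> \<in> carrier ((Aut_group h)\<lparr>carrier := range (phi h)\<rparr>)"
    by (simp add: Aut_group_def phi_eq') (metis phim_0 rangeI)
qed (auto simp: Aut_group_def phi_eq' phim_comp add.commute o_assoc)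

lemma phi_normal:
  assumes d: "degree h \<ge> 1"
  shows "range (phi h) \<lhd> Aut_group h"
proof -
  have "\<forall>x\<in>carrier (Aut_group h). \<forall>k\<in>range (phi h).
          x \<otimes>\<^bsub>Aut_group h\<^esub> k \<otimes>\<^bsub>Aut_group h\<^esub> inv\<^bsub>Aut_group h\<^esub> x \<in> range (phi h)"
  proof (intro ballI)
    fix x k assume x: "x \<in> carrier (Aut_group h)" and k: "k \<in> range (phi h)"
    have xa: "is_aut h x" using x by (simp add: Aut_group_def)
    obtain f where kf: "k = phim h f" using k by (auto simp: phi_eq')
    have iv: "inv\<^bsub>Aut_group h\<^esub> x = inv_into UNIV x"
      by (rule Aut_inv) (simp_all add: xa aut_linv[OF xa])
    let ?v = "inv_into UNIV x"
    have va: "is_aut h ?v" using aut_linv[OF xa] by simp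
    have r: "is_aut h (x \<circ> phim h f \<circ> ?v)" by (intro aut_comp xa phim_aut va)
    obtain \<alpha> \<beta> where vx: "?v ah_x = ah_const [:\<beta>, \<alpha>:]" using aut_x[OF va d] by blast
    have "(x \<circ> phim h f \<circ> ?v) ah_x = x (?v ah_x)" by (simp add: vx phim_const)
    also have "\<dots> = ah_x" using xa by (simp add: is_aut_iff bij_is_surj surj_f_inv_f)
    finally obtain g where "x \<circ> phim h f \<circ> ?v = phim h g" using aut_fix_x[OF r _ d] by blast
    thus "x \<otimes>\<^bsub>Aut_group h\<^esub> k \<otimes>\<^bsub>Aut_group h\<^esub> inv\<^bsub>Aut_group h\<^esub> x \<in> range (phi h)"
      unfolding iv kf by (simp add: Aut_group_def phi_eq')
  qed
  thus ?thesis using phi_range_sub by (simp add: group.normal_inv_iff[OF Aut_grp])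
qed

lemma tau_sub:
  assumes d: "degree h \<ge> 1"
  shows "subgroup ((\<lambda>(\<alpha>, \<beta>). tau h \<alpha> \<beta>) ` Pset h) (Aut_group h)"
proof (rule group.subgroupI[OF Aut_grp])
  show "(\<lambda>(\<alpha>, \<beta>). tau h \<alpha> \<beta>) ` Pset h \<subseteq> carrier (Aut_group h)"
    using d by (auto simp: Aut_group_def tau_eq taum_aut)
  show "(\<lambda>(\<alpha>, \<beta>). tau h \<alpha> \<beta>) ` Pset h \<noteq> {}" using Pset_one by blast
  show "inv\<^bsub>Aut_group h\<^esub> a \<in> (\<lambda>(\<alpha>, \<beta>). tau h \<alpha> \<beta>) ` Pset h"
    if Aa: "a \<in> (\<lambda>(\<alpha>, \<beta>). tau h \<alpha> \<beta>) ` Pset h" for a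
  proof -
    obtain \<alpha> \<beta> where P: "(\<alpha>, \<beta>) \<in> Pset h" and a0: "a = tau h \<alpha> \<beta>" using Aa by auto
    have a: "a = taum h \<alpha> \<beta>" using a0 tau_eq[OF P d] by simp
    have "inv\<^bsub>Aut_group h\<^esub> a = taum h (1/\<alpha>) (- (\<beta> / \<alpha>))"
      unfolding a by (rule Aut_inv) (use taum_inv[OF P d] in \<open>simp_all add: taum_aut[OF P d] taum_aut[OF Pset_inv[OF P] d]\<close>)
    also have "\<dots> = tau h (1/\<alpha>) (- (\<beta> / \<alpha>))" by (simp add: tau_eq[OF Pset_inv[OF P] d])
    finally show ?thesis using Pset_inv[OF P] by force
  qed
  show "a \<otimes>\<^bsub>Aut_group h\<^esub> b \<in> (\<lambda>(\<alpha>, \<beta>). tau h \<alpha> \<beta>) ` Pset h"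
    if Aa: "a \<in> (\<lambda>(\<alpha>, \<beta>). tau h \<alpha> \<beta>) ` Pset h" and Bb: "b \<in> (\<lambda>(\<alpha>, \<beta>). tau h \<alpha> \<beta>) ` Pset h" for a b
  proof -
    obtain \<alpha> \<beta> where P: "(\<alpha>, \<beta>) \<in> Pset h" and a: "a = tau h \<alpha> \<beta>" using Aa by auto
    obtain \<alpha>' \<beta>' where P': "(\<alpha>', \<beta>') \<in> Pset h" and b: "b = tau h \<alpha>' \<beta>'" using Bb by auto
    have "a \<otimes>\<^bsub>Aut_group h\<^esub> b = tau h (\<alpha> * \<alpha>') (\<beta>' + \<alpha>' * \<beta>)"
      by (simp add: Aut_group_def a b tau_eq[OF P d] tau_eq[OF P' d] tau_eq[OF Pset_mult[OF P P'] d] taum_comp[OF P P' d])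
    thus ?thesis using Pset_mult[OF P P'] by force
  qed
qed

lemma inter_id:
  assumes d: "degree h \<ge> 1"
  shows "range (phi h) \<inter> (\<lambda>(\<alpha>, \<beta>). tau h \<alpha> \<beta>) ` Pset h = {id}"
proof
  show "range (phi h) \<inter> (\<lambda>(\<alpha>, \<beta>). tau h \<alpha> \<beta>) ` Pset h \<subseteq> {id}"
  proof
    fix w assume "w \<in> range (phi h) \<inter> (\<lambda>(\<alpha>, \<beta>). tau h \<alpha> \<beta>) ` Pset h"
    hence A: "w \<in> range (phi h)" and B: "w \<in> (\<lambda>(\<alpha>, \<beta>). tau h \<alpha> \<beta>) ` Pset h" by auto
    from A obtain f where w1: "w = phi h f" by auto
    from B obtain \<alpha> \<beta> where P: "(\<alpha>, \<beta>) \<in> Pset h" and w2: "w = tau h \<alpha> \<beta>" by auto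
    from w1 w2 have "f = 0" using part_ii[OF P d, of f] by simp
    thus "w \<in> {id}" using w1 by (simp add: phi_eq phim_0)
  qed
  have "id = phi h 0" by (simp add: phi_eq phim_0)
  moreover have "id = tau h 1 0" by (simp add: tau_eq[OF Pset_one d] taum_one[OF d])
  ultimately show "{id} \<subseteq> range (phi h) \<inter> (\<lambda>(\<alpha>, \<beta>). tau h \<alpha> \<beta>) ` Pset h"
    using Pset_one by force
qed

lemma prod_all:
  assumes d: "degree h \<ge> 1"
  shows "range (phi h) <#>\<^bsub>Aut_group h\<^esub> ((\<lambda>(\<alpha>, \<beta>). tau h \<alpha> \<beta>) ` Pset h) = carrier (Aut_group h)"
proof
  show "range (phi h) <#>\<^bsub>Aut_group h\<^esub> ((\<lambda>(\<alpha>, \<beta>). tau h \<alpha> \<beta>) ` Pset h) \<subseteq> carrier (Aut_group h)"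
    using d by (auto simp: set_mult_def Aut_group_def phi_eq' tau_eq intro!: aut_comp phim_aut taum_aut)
  show "carrier (Aut_group h) \<subseteq> range (phi h) <#>\<^bsub>Aut_group h\<^esub> ((\<lambda>(\<alpha>, \<beta>). tau h \<alpha> \<beta>) ` Pset h)"
  proof
    fix w assume "w \<in> carrier (Aut_group h)"
    hence "is_aut h w" by (simp add: Aut_group_def)
    then obtain \<alpha> \<beta> f where P: "(\<alpha>, \<beta>) \<in> Pset h" and w: "w = phi h f \<circ> tau h \<alpha> \<beta>" using part_i[OF _ d] by blast
    show "w \<in> range (phi h) <#>\<^bsub>Aut_group h\<^esub> ((\<lambda>(\<alpha>, \<beta>). tau h \<alpha> \<beta>) ` Pset h)"
      unfolding set_mult_def using P w by (force simp: Aut_group_def)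
  qed
qed

theorem theorem8p3:
  fixes h :: "'a::field poly"
  assumes "degree h \<ge> 1"
  shows
    "(\<forall>w. is_aut h w \<longrightarrow> (\<exists>\<alpha> \<beta> f. (\<alpha>, \<beta>) \<in> Pset h \<and> w = phi h f \<circ> tau h \<alpha> \<beta>))
   \<and> (\<forall>\<alpha> \<beta> f. (\<alpha>, \<beta>) \<in> Pset h \<longrightarrow>
        (tau h \<alpha> \<beta> = phi h f \<longleftrightarrow> \<alpha> = 1 \<and> \<beta> = 0 \<and> f = 0))
   \<and> (\<forall>\<alpha> \<beta> (l::nat). (\<alpha>, \<beta>) \<in> Pset h \<and> \<alpha> \<noteq> 1 \<and> l \<ge> 2 \<and> \<alpha> ^ l = 1 \<longrightarrow>
        tau h \<alpha> \<beta> ^^ l = id)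
   \<and> (\<forall>f g. phi h (f + g) = phi h f \<circ> phi h g) \<and> inj (phi h)
   \<and> comm_group ((Aut_group h)\<lparr>carrier := range (phi h)\<rparr>)
   \<and> range (phi h) \<lhd> Aut_group h
   \<and> subgroup ((\<lambda>(\<alpha>, \<beta>). tau h \<alpha> \<beta>) ` Pset h) (Aut_group h)
   \<and> range (phi h) \<inter> (\<lambda>(\<alpha>, \<beta>). tau h \<alpha> \<beta>) ` Pset h = {id}
   \<and> range (phi h) <#>\<^bsub>Aut_group h\<^esub> ((\<lambda>(\<alpha>, \<beta>). tau h \<alpha> \<beta>) ` Pset h) = carrier (Aut_group h)"
proof (intro conjI allI impI)
  show "\<exists>\<alpha> \<beta> f. (\<alpha>, \<beta>) \<in> Pset h \<and> w = phi h f \<circ> tau h \<alpha> \<beta>" if "is_aut h w" for w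
    using part_i[OF that assms] .
  show "(tau h \<alpha> \<beta> = phi h f) = (\<alpha> = 1 \<and> \<beta> = 0 \<and> f = 0)" if "(\<alpha>, \<beta>) \<in> Pset h" for \<alpha> \<beta> f
    using part_ii[OF that assms] .
  show "tau h \<alpha> \<beta> ^^ l = id" if "(\<alpha>, \<beta>) \<in> Pset h \<and> \<alpha> \<noteq> 1 \<and> l \<ge> 2 \<and> \<alpha> ^ l = 1" for \<alpha> \<beta> and l :: nat
    using part_iii[OF _ assms, of \<alpha> \<beta> l] that by blast
  show "phi h (f + g) = phi h f \<circ> phi h g" for f g by (simp add: phi_eq phim_comp)
  show "inj (phi h)"
  proof (rule injI)
    fix f g assume "phi h f = phi h g"
    hence "phim h f ah_y = phim h g ah_y" by (simp add: phi_eq)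
    thus "f = g" by (simp add: phim_y ah_const_def)
  qed
  show "comm_group ((Aut_group h)\<lparr>carrier := range (phi h)\<rparr>)" by (rule phi_comm)
  show "range (phi h) \<lhd> Aut_group h" by (rule phi_normal[OF assms])
  show "subgroup ((\<lambda>(\<alpha>, \<beta>). tau h \<alpha> \<beta>) ` Pset h) (Aut_group h)" by (rule tau_sub[OF assms])
  show "range (phi h) \<inter> (\<lambda>(\<alpha>, \<beta>). tau h \<alpha> \<beta>) ` Pset h = {id}" by (rule inter_id[OF assms])
  show "range (phi h) <#>\<^bsub>Aut_group h\<^esub> ((\<lambda>(\<alpha>, \<beta>). tau h \<alpha> \<beta>) ` Pset h) = carrier (Aut_group h)"
    by (rule prod_all[OF assms])
qed

end
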